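(* Let $a=(a_1,\dots,a_\ell)$ be a composition (a sequence of positive integers) of length $\ell\ge1$, and let $\tau_{112}(a)$ denote the partition $12\cdots \ell\,\ell^{a_\ell-1}(\ell-1)^{a_{\ell-1}-1}\cdots 1^{a_1-1}$. Define $F_a(x,y)=\sum_{n,k\ge0}p_{n,k}(112,\tau_{112}(a))x^ny^k$. Then \[F_a(x,y)=\sum_{j=0}^{\ell-1}\frac{x^{a_1+\cdots+a_j}y^j(1-x)}{\prod_{i=1}^{j+1}\bigl(1-x(1+y)+x^{a_i}y\bigr)},\] where the empty sum $a_1+\dots+a_0$ is $0$.
   Context: A set partition of $[n]=\{1,\dots,n\}$ with blocks $B_1,B_2,\dots,B_k$ ordered so that $\min B_1<\min B_2<\cdots$ is represented by its canonical sequential form $\pi=\pi_1\cdots\pi_n$ where $j\in B_{\pi_j}$; equivalently, $\pi$ is a word with $\pi_1=1$, onto $[k]$, and $\pi_{i+1}\le \max(\pi_1,\dots,\pi_i)+1$. For $n=0$ there is one (empty) partition. A partition $\pi$ contains a pattern (partition) $\tau=\tau_1\cdots\tau_m$ if $\pi$ has a subsequence $\pi_{f(1)}\cdots\pi_{f(m)}$ ($f(1)<\dots<f(m)$) order-isomorphic to $\tau$ (i.e. $\pi_{f(i)}<\pi_{f(j)}$ iff $\tau_i<\tau_j$, and $\pi_{f(i)}>\pi_{f(j)}$ iff $\tau_i>\tau_j$); otherwise it avoids $\tau$. $p_{n,k}(T)$ is the number of partitions of $[n]$ with exactly $k$ blocks avoiding every pattern in $T$; $a^q$ denotes $q$ copies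 of the symbol $a$. *)

theory Defs
  imports "HOL-Computational_Algebra.Formal_Power_Series"
          "HOL-Computational_Algebra.Polynomial"
          "HOL-Computational_Algebra.Fraction_Field"
begin

text \<open>Canonical sequential form of a set partition of [n] (restricted growth word):
  every letter is positive and at most one more than the maximum of the preceding
  letters (with max of the empty prefix taken as 0, forcing the first letter to be 1).\<close>
definition is_setpart :: "nat list \<Rightarrow> bool" where
  "is_setpart w \<longleftrightarrow>
     (\<forall>i < length w. 1 \<le> w ! i \<and> w ! i \<le> Suc (Max (insert 0 (set (take i w)))))"

definition nblocks :: "nat list \<Rightarrow> nat" where
  "nblocks w = Max (insert 0 (set w))"

definition order_iso :: "nat list \<Rightarrow> nat list \<Rightarrow> bool" where
  "order_iso s t \<longleftrightarrow> length s = length t \<and>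
     (\<forall>i < length s. \<forall>j < length s.
        (s ! i < s ! j \<longleftrightarrow> t ! i < t ! j) \<and> (s ! i > s ! j \<longleftrightarrow> t ! i > t ! j))"

definition contains :: "nat list \<Rightarrow> nat list \<Rightarrow> bool" where
  "contains w t \<longleftrightarrow> (\<exists>f :: nat \<Rightarrow> nat.
      strict_mono_on {..<length t} f \<and> (\<forall>i < length t. f i < length w) \<and>
      order_iso (map (\<lambda>i. w ! f i) [0..<length t]) t)"

definition pnk :: "nat \<Rightarrow> nat \<Rightarrow> nat list set \<Rightarrow> nat" where
  "pnk n k T = card {w. is_setpart w \<and> length w = n \<and> nblocks w = k \<and>
                        (\<forall>t\<in>T. \<not> contains w t)}"

text \<open>The partition 12...l l^(a_l - 1) (l-1)^(a_(l-1) - 1) ... 1^(a_1 - 1),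
  with the composition given as a 0-indexed list (a_i = a ! (i-1)).\<close>
definition tau112 :: "nat list \<Rightarrow> nat list" where
  "tau112 a = [1..<length a + 1] @
     concat (map (\<lambda>i. replicate (a ! (i - 1) - 1) i) (rev [1..<length a + 1]))"

text \<open>Bivariate generating function as a power series in x whose coefficients are
  polynomials in y (embedded into the fraction field of Z[y]).  Since a partition
  of [n] has at most n blocks, the inner sum over k is finite (k \<le> n).\<close>
definition yvar :: "int poly fract fps" where
  "yvar = fps_const (Fract [:0, 1:] 1)"

definition Fgf :: "nat list \<Rightarrow> int poly fract fps" where
  "Fgf a = Abs_fps (\<lambda>n. Fract (\<Sum>k\<le>n. monom (int (pnk n k {[1,1,2], tau112 a})) k) 1)"

end

theory Submission
  imports Defs "HOL-Library.Sublist"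
begin


fun Dw :: "nat list \<Rightarrow> nat list" where
  "Dw [] = []"
| "Dw (c#cs) = map Suc (Dw cs) @ replicate c 1"

definition build :: "nat list \<Rightarrow> nat list" where
  "build cs = [1..<length cs + 1] @ Dw cs"

definition cnt :: "nat list \<Rightarrow> nat \<Rightarrow> nat" where
  "cnt w v = length (filter (\<lambda>x. x = v) w)"

declare upt_Suc[simp del]

unbundle fps_syntax

lemma sorted_wrt_replicate: "sorted_wrt (\<ge>) (replicate n (x::nat))"
  by (induction n) auto

lemma set_Dw: "x \<in> set (Dw cs) \<Longrightarrow> 1 \<le> x \<and> x \<le> length cs"
  by (induction cs arbitrary: x) auto

lemma sorted_Dw: "sorted_wrt (\<ge>) (Dw cs)"
  by (induction cs) (auto simp: sorted_wrt_append sorted_wrt_map sorted_wrt_replicate dest: set_Dw)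

lemma length_Dw: "length (Dw cs) = sum_list cs"
  by (induction cs) auto

lemma cnt_append: "cnt (u @ v) x = cnt u x + cnt v x"
  by (simp add: cnt_def)

lemma cnt_map_Suc: "cnt (map Suc u) (Suc x) = cnt u x"
  by (induction u) (auto simp: cnt_def)

lemma cnt_map_Suc0: "cnt (map Suc u) 0 = 0"
  by (induction u) (auto simp: cnt_def)

lemma cnt_replicate: "cnt (replicate c x) v = (if x = v then c else 0)"
  by (simp add: cnt_def filter_replicate)

lemma cnt_Dw: "cnt (Dw cs) v = (if 1 \<le> v \<and> v \<le> length cs then cs ! (v - 1) else 0)"
proof (induction cs arbitrary: v)
  case Nil
  then show ?case by (simp add: cnt_def)
next
  case (Cons c cs)
  show ?case
  proof (cases v)
    case 0
    then show ?thesis by (simp add: cnt_append cnt_map_Suc0, simp add: cnt_def)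
  next
    case (Suc u)
    then show ?thesis using Cons[of u]
      by (cases u) (auto simp: cnt_append cnt_map_Suc cnt_replicate)
  qed
qed

lemma cnt_upt: "cnt [1..<k+1] v = (if 1 \<le> v \<and> v \<le> k then 1 else 0)"
proof -
  have "filter (\<lambda>x. x = v) [1..<k+1] = (if 1 \<le> v \<and> v \<le> k then [v] else [])"
  proof (cases "1 \<le> v \<and> v \<le> k")
    case True
    then have "[1..<k+1] = [1..<v] @ [v] @ [Suc v..<k+1]"
      by (metis Suc_eq_plus1 le_imp_less_Suc upt_add_eq_append upt_rec  append_Cons append_Nil
          add_le_cancel_right le_add_diff_inverse le_add2 less_imp_le_nat not_less_eq_eq)
    then show ?thesis using True by (auto simp: filter_empty_conv)
  next
    case False
    then show ?thesis by (auto simp: filter_empty_conv)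
  qed
  then show ?thesis by (simp add: cnt_def)
qed

lemma cnt_build: "cnt (build cs) v = (if 1 \<le> v \<and> v \<le> length cs then Suc (cs ! (v - 1)) else 0)"
  using cnt_upt[of "length cs" v] by (simp add: build_def cnt_append cnt_Dw)

lemma build_nth: "i < length cs \<Longrightarrow> build cs ! i = Suc i"
  by (simp add: build_def nth_append)

lemma length_build: "length (build cs) = length cs + sum_list cs"
  by (simp add: build_def length_Dw)

lemma set_build: "set (build cs) = {1..length cs}"
  using set_Dw[of _ cs] by (auto simp: build_def)

lemma build_Cons: "build (c # cs) = 1 # map Suc (build cs) @ replicate c 1"
  by (simp add: build_def map_Suc_upt upt_conv_Cons)

lemma Dw_closed: "Dw cs = concat (map (\<lambda>i. replicate (cs ! (i - 1)) i) (rev [1..<length cs + 1]))"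
proof (induction cs)
  case Nil
  then show ?case by simp
next
  case (Cons c cs)
  have r: "rev [1..<length (c#cs) + 1] = map Suc (rev [1..<length cs + 1]) @ [1]"
    by (simp add: upt_conv_Cons map_Suc_upt rev_map[symmetric])
  have "map (\<lambda>i. replicate ((c # cs) ! (i - 1)) i) (map Suc (rev [1..<length cs + 1]))
        = map (\<lambda>i. map Suc (replicate (cs ! (i - 1)) i)) (rev [1..<length cs + 1])"
    by (auto simp: nth_Cons' split: nat.splits)
  then have "concat (map (\<lambda>i. replicate ((c # cs) ! (i - 1)) i) (rev [1..<length (c#cs) + 1]))
     = map Suc (concat (map (\<lambda>i. replicate (cs ! (i - 1)) i) (rev [1..<length cs + 1]))) @ replicate c 1"
    unfolding r
    by (simp add: map_concat, intro arg_cong[where f=concat] map_cong)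
       (auto simp: nth_Cons' split: nat.splits)
  then show ?case using Cons by simp
qed

lemma tau112_build: "tau112 a = build (map (\<lambda>x. x - 1) a)"
  unfolding tau112_def build_def Dw_closed
  by (auto intro!: arg_cong[where f=concat] map_cong)

lemma all_less_3: "(\<forall>i<(3::nat). P i) = (P 0 \<and> P 1 \<and> P 2)"
proof -
  have "i < 3 \<longleftrightarrow> i = 0 \<or> i = 1 \<or> i = (2::nat)" for i by auto
  then show ?thesis by metis
qed

lemma upt_3: "[0..<3] = [0,1,2::nat]"
  by (simp add: numeral_3_eq_3 upt_rec)

definition has112 :: "nat list \<Rightarrow> bool" where
  "has112 w \<longleftrightarrow> (\<exists>p q r. p < q \<and> q < r \<and> r < length w \<and> w!p = w!q \<and> w!q < w!r)"

lemma contains112: "contains w [1,1,2] \<longleftrightarrow> has112 w"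
proof
  assume "contains w [1,1,2]"
  then obtain f where sm: "strict_mono_on {..<3} f" and lt: "\<forall>i<3. f i < length w"
    and iso: "order_iso (map (\<lambda>i. w ! f i) [0..<3]) [1,1,2]"
    by (auto simp: contains_def numeral_3_eq_3)
  have "f 0 < f 1" "f 1 < f 2" using sm by (auto simp: strict_mono_on_def)
  moreover have "f 2 < length w" using lt by auto
  moreover have "w ! f 0 = w ! f 1" "w ! f 1 < w ! f 2"
  proof -
    have L: "length (map (\<lambda>i. w ! f i) [0..<3]) = 3" by simp
    have n: "map (\<lambda>i. w ! f i) [0..<3] ! 0 = w ! f 0" "map (\<lambda>i. w ! f i) [0..<3] ! 1 = w ! f 1"
       "map (\<lambda>i. w ! f i) [0..<3] ! 2 = w ! f 2" by (simp_all add: upt_3)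
    have i: "\<And>i j. i < 3 \<Longrightarrow> j < 3 \<Longrightarrow>
       (map (\<lambda>i. w ! f i) [0..<3] ! i < map (\<lambda>i. w ! f i) [0..<3] ! j \<longleftrightarrow> [1,1,2::nat] ! i < [1,1,2] ! j) \<and>
       (map (\<lambda>i. w ! f i) [0..<3] ! i > map (\<lambda>i. w ! f i) [0..<3] ! j \<longleftrightarrow> [1,1,2::nat] ! i > [1,1,2] ! j)"
      using iso unfolding order_iso_def L by blast
    from i[of 0 1] n show "w ! f 0 = w ! f 1" by simp
    from i[of 1 2] n show "w ! f 1 < w ! f 2" by simp
  qed
  ultimately show "has112 w" unfolding has112_def by blast
next
  assume "has112 w"
  then obtain p q r where h: "p < q" "q < r" "r < length w" "w!p = w!q" "w!q < w!r"
    unfolding has112_def by blast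
  define f where "f = (\<lambda>i::nat. if i = 0 then p else if i = 1 then q else r)"
  have "strict_mono_on {..<3} f"
    unfolding strict_mono_on_def f_def using h by (auto simp: numeral_3_eq_3 less_Suc_eq)
  moreover have "\<forall>i<3. f i < length w" using h by (auto simp: f_def all_less_3)
  moreover have "order_iso (map (\<lambda>i. w ! f i) [0..<3]) [1,1,2]"
  proof -
    have m: "map (\<lambda>i. w ! f i) [0..<3] = [w!p, w!q, w!r]" by (simp add: upt_3 f_def)
    have I: "i < Suc (Suc (Suc 0)) \<Longrightarrow> i = 0 \<or> i = Suc 0 \<or> i = 2" for i::nat by auto
    show ?thesis unfolding m order_iso_def using h by (auto dest!: I)
  qed
  ultimately show "contains w [1,1,2]" unfolding contains_def by (auto simp: numeral_3_eq_3)
qed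

lemma Max_pref: "set D \<subseteq> {1..k} \<Longrightarrow> Max (insert 0 (set ([1..<Suc k] @ D))) = k"
proof -
  assume "set D \<subseteq> {1..k}"
  then have "insert 0 (set ([1..<Suc k] @ D)) = {..k}" by auto
  then show ?thesis by (simp, intro Max_eqI) auto
qed

lemma last_le_sorted: "sorted_wrt (\<ge>) (D::nat list) \<Longrightarrow> d \<in> set D \<Longrightarrow> last D \<le> d"
proof (induction D)
  case Nil then show ?case by simp
next
  case (Cons x D)
  then show ?case by (cases "D = []") auto
qed

lemma is_setpart_snoc: "is_setpart (w @ [x]) \<longleftrightarrow>
   is_setpart w \<and> 1 \<le> x \<and> x \<le> Suc (Max (insert 0 (set w)))"
proof -
  have A: "\<And>i. i < length w \<Longrightarrow> (w@[x])!i = w!i \<and> take i (w@[x]) = take i w"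
    by (simp add: nth_append)
  have B: "(w@[x]) ! length w = x" "take (length w) (w@[x]) = w" by simp_all
  show ?thesis
  proof
    assume h: "is_setpart (w @ [x])"
    have "is_setpart w" unfolding is_setpart_def
    proof (intro allI impI)
      fix i assume i: "i < length w"
      then show "1 \<le> w ! i \<and> w ! i \<le> Suc (Max (insert 0 (set (take i w))))"
        using h A[OF i] unfolding is_setpart_def by (metis length_append_singleton less_SucI)
    qed
    moreover have "1 \<le> x \<and> x \<le> Suc (Max (insert 0 (set w)))"
      using h B unfolding is_setpart_def by (metis length_append_singleton lessI)
    ultimately show "is_setpart w \<and> 1 \<le> x \<and> x \<le> Suc (Max (insert 0 (set w)))" by blast
  next
    assume h: "is_setpart w \<and> 1 \<le> x \<and> x \<le> Suc (Max (insert 0 (set w)))"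
    show "is_setpart (w @ [x])" unfolding is_setpart_def
    proof (intro allI impI)
      fix i assume i: "i < length (w @ [x])"
      show "1 \<le> (w @ [x]) ! i \<and> (w @ [x]) ! i \<le> Suc (Max (insert 0 (set (take i (w @ [x])))))"
      proof (cases "i < length w")
        case True
        then show ?thesis using h A[OF True] unfolding is_setpart_def by metis
      next
        case False
        then have "i = length w" using i by simp
        then show ?thesis using h B by simp
      qed
    qed
  qed
qed

lemma has112_snoc: "has112 w \<Longrightarrow> has112 (w @ [x])"
proof -
  assume "has112 w"
  then obtain p q r where h: "p < q" "q < r" "r < length w" "w!p = w!q" "w!q < w!r"
    unfolding has112_def by blast
  then have "(w@[x])!p = w!p" "(w@[x])!q = w!q" "(w@[x])!r = w!r" by (simp_all add: nth_append)
  then show ?thesis unfolding has112_def using h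
    by (intro exI[of _ p] exI[of _ q] exI[of _ r]) simp
qed

lemma avoid112_form:
  "is_setpart w \<Longrightarrow> \<not> has112 w \<Longrightarrow>
   \<exists>k D. w = [1..<Suc k] @ D \<and> sorted_wrt (\<ge>) D \<and> set D \<subseteq> {1..k}"
proof (induction w rule: rev_induct)
  case Nil
  then show ?case by (intro exI[of _ 0] exI[of _ "[]"]) simp
next
  case (snoc x w)
  then have sp: "is_setpart w" and x1: "1 \<le> x" and xm: "x \<le> Suc (Max (insert 0 (set w)))"
    by (auto simp: is_setpart_snoc)
  have "\<not> has112 w" using snoc.prems(2) has112_snoc by blast
  then obtain k D where w: "w = [1..<Suc k] @ D" and so: "sorted_wrt (\<ge>) D"
    and sD: "set D \<subseteq> {1..k}" using snoc.IH sp by blast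
  have xk: "x \<le> Suc k" using xm Max_pref[OF sD] w by simp
  show ?case
  proof (cases "D = []")
    case True
    show ?thesis
    proof (cases "x = Suc k")
      case True
      then show ?thesis using w \<open>D = []\<close>
        by (intro exI[of _ "Suc k"] exI[of _ "[]"]) (simp add: upt_Suc_append)
    next
      case False
      then show ?thesis using w \<open>D = []\<close> x1 xk
        by (intro exI[of _ k] exI[of _ "[x]"]) simp
    qed
  next
    case False
    define y where "y = last D"
    have yD: "y \<in> set D" using False by (simp add: y_def)
    then have y1: "1 \<le> y" "y \<le> k" using sD by auto
    have "x \<le> y"
    proof (rule ccontr)
      assume "\<not> x \<le> y"
      have "y - 1 < k" using y1 by linarith
      then have wy: "w ! (y - 1) = y" using y1 w by (simp add: nth_append)
      have "0 < length D" using False by simp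
      moreover have "length w = k + length D" using w by simp
      ultimately have e: "length w - 1 = k + (length D - 1)" by linarith
      have wl: "w ! (length w - 1) = y" unfolding e using False
        by (simp add: w y_def nth_append last_conv_nth)
      have lt1: "y - 1 < length w - 1" using y1 w False by (cases D) auto
      have lt2: "length w - 1 < length w" using w False by simp
      have "has112 (w @ [x])"
        unfolding has112_def
      proof (intro exI conjI)
        show "y - 1 < length w - 1" by (rule lt1)
        show "length w - 1 < length w" by (rule lt2)
        show "length w < length (w @ [x])" by simp
        show "(w @ [x]) ! (y - 1) = (w @ [x]) ! (length w - 1)"
          using lt1 lt2 wy wl by (simp add: nth_append_left)
        show "(w @ [x]) ! (length w - 1) < (w @ [x]) ! length w"
          using lt2 wl \<open>\<not> x \<le> y\<close> by (simp add: nth_append_left)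
      qed
      then show False using snoc.prems(2) by blast
    qed
    then have "sorted_wrt (\<ge>) (D @ [x])"
      using so last_le_sorted[OF so] by (force simp: sorted_wrt_append y_def)
    then show ?thesis using w sD \<open>x \<le> y\<close> y1 x1
      by (intro exI[of _ k] exI[of _ "D @ [x]"]) auto
  qed
qed

lemma set_Dw_sub: "set (Dw cs) \<subseteq> {1..length cs}"
  using set_Dw by fastforce

lemma build_alt: "build cs = [1..<Suc (length cs)] @ Dw cs"
  by (simp add: build_def)

lemma setpart_build: "is_setpart (build cs)"
  unfolding is_setpart_def
proof (intro allI impI)
  fix i assume i: "i < length (build cs)"
  let ?k = "length cs"
  show "1 \<le> build cs ! i \<and> build cs ! i \<le> Suc (Max (insert 0 (set (take i (build cs)))))"
  proof (cases "i < ?k")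
    case True
    have "take i (build cs) = [1..<Suc i] @ []" using True by (simp add: build_alt take_upt)
    then have "Max (insert 0 (set (take i (build cs)))) = i" using Max_pref[of "[]" i] by simp
    then show ?thesis using True by (simp add: build_nth)
  next
    case False
    have t: "take i (build cs) = [1..<Suc ?k] @ take (i - ?k) (Dw cs)" using False
      by (simp add: build_alt)
    have "set (take (i - ?k) (Dw cs)) \<subseteq> {1..?k}"
      using set_Dw_sub[of cs] set_take_subset[of "i - ?k" "Dw cs"] by (rule order_trans[rotated])
    then have M: "Max (insert 0 (set (take i (build cs)))) = ?k" unfolding t by (rule Max_pref)
    have "build cs ! i = Dw cs ! (i - ?k)" using False by (simp add: build_alt nth_append)
    moreover have "i - ?k < length (Dw cs)" using i False by (simp add: length_build length_Dw)
    ultimately have "build cs ! i \<in> set (Dw cs)" by simp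
    then have "1 \<le> build cs ! i \<and> build cs ! i \<le> ?k" by (rule set_Dw)
    then show ?thesis unfolding M by simp
  qed
qed

lemma nblocks_build: "nblocks (build cs) = length cs"
  unfolding nblocks_def build_alt using Max_pref[OF set_Dw_sub] by simp

lemma no112_build: "\<not> has112 (build cs)"
proof
  assume "has112 (build cs)"
  then obtain p q r where h: "p < q" "q < r" "r < length (build cs)"
    "build cs ! p = build cs ! q" "build cs ! q < build cs ! r" unfolding has112_def by blast
  let ?k = "length cs"
  show False
  proof (cases "q < ?k")
    case True
    then show False using h build_nth[of p cs] build_nth[of q cs] by simp
  next
    case False
    have "build cs ! q = Dw cs ! (q - ?k)" "build cs ! r = Dw cs ! (r - ?k)"
      using False h by (simp_all add: build_alt nth_append)
    moreover have "r - ?k < length (Dw cs)" using h False by (simp add: length_build length_Dw)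
    moreover have "q - ?k < r - ?k" using h False by simp
    ultimately show False using h sorted_wrt_nth_less[OF sorted_Dw, of "q - ?k" "r - ?k" cs] by simp
  qed
qed

lemma split_sorted:
  "sorted_wrt (\<ge>) D \<Longrightarrow> set D \<subseteq> {1..} \<Longrightarrow>
   D = filter (\<lambda>x. 2 \<le> x) D @ replicate (cnt D 1) 1"
proof (induction D)
  case Nil then show ?case by (simp add: cnt_def)
next
  case (Cons x D)
  show ?case
  proof (cases "2 \<le> x")
    case True
    then show ?thesis using Cons by (simp add: cnt_def)
  next
    case False
    then have x: "x = 1" using Cons.prems by auto
    have "\<forall>y\<in>set D. y \<le> 1" using Cons.prems x by auto
    moreover have "\<forall>y\<in>set D. 1 \<le> y" using Cons.prems by auto
    ultimately have "\<forall>y\<in>set D. y = 1" by (metis le_antisym)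
    then have f: "filter (\<lambda>x. 2 \<le> x) D = []" "cnt D 1 = length D" and r: "replicate (length D) 1 = D"
      by (auto simp: filter_empty_conv cnt_def filter_id_conv replicate_length_same)
    have "filter (\<lambda>x. 2 \<le> x) (x # D) @ replicate (cnt (x # D) 1) 1 = 1 # replicate (length D) 1"
      using x f by (simp add: cnt_def)
    then show ?thesis using x r by simp
  qed
qed

lemma cnt_shift: "cnt (map (\<lambda>x. x - 1) (filter (\<lambda>x. 2 \<le> x) D)) (Suc j) = cnt D (Suc (Suc j))"
  unfolding cnt_def by (induction D) auto

lemma Dw_unique:
  "sorted_wrt (\<ge>) D \<Longrightarrow> set D \<subseteq> {1..k} \<Longrightarrow> D = Dw (map (\<lambda>j. cnt D (Suc j)) [0..<k])"
proof (induction k arbitrary: D)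
  case 0
  then show ?case by auto
next
  case (Suc k)
  define D2 where "D2 = filter (\<lambda>x. 2 \<le> x) D"
  define D' where "D' = map (\<lambda>x. x - 1) D2"
  have sp: "D = D2 @ replicate (cnt D 1) 1"
    using split_sorted[OF Suc.prems(1)] Suc.prems(2) unfolding D2_def by fastforce
  have mD: "map Suc D' = D2" unfolding D'_def D2_def by (induction D) auto
  have "sorted_wrt (\<ge>) D2" unfolding D2_def using Suc.prems(1) by (simp add: sorted_wrt_filter)
  then have "sorted_wrt (\<ge>) D'" unfolding D'_def by (auto simp: sorted_wrt_map elim!: sorted_wrt_mono_rel[rotated])
  moreover have "set D' \<subseteq> {1..k}"
  proof
    fix z assume "z \<in> set D'"
    then obtain x where "x \<in> set D" "2 \<le> x" "z = x - 1" unfolding D'_def D2_def by auto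
    moreover have "x \<le> Suc k" using Suc.prems(2) \<open>x \<in> set D\<close> by auto
    ultimately show "z \<in> {1..k}" by auto
  qed
  ultimately have IH: "D' = Dw (map (\<lambda>j. cnt D' (Suc j)) [0..<k])" by (rule Suc.IH)
  have c: "map (\<lambda>j. cnt D' (Suc j)) [0..<k] = map (\<lambda>j. cnt D (Suc (Suc j))) [0..<k]"
    unfolding D'_def D2_def using cnt_shift[simplified] by simp
  have "map (\<lambda>j. cnt D (Suc j)) [0..<Suc k] = cnt D 1 # map (\<lambda>j. cnt D (Suc (Suc j))) [0..<k]"
    by (simp add: upt_conv_Cons map_Suc_upt[symmetric])
  then have "Dw (map (\<lambda>j. cnt D (Suc j)) [0..<Suc k]) = map Suc D' @ replicate (cnt D 1) 1"
    using IH c by simp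
  then show ?case using sp mD by simp
qed

lemma build_inv: "cs = map (\<lambda>j. cnt (build cs) (Suc j) - 1) [0..<nblocks (build cs)]"
  by (rule nth_equalityI) (auto simp: nblocks_build cnt_build)

lemma inj_build: "inj build"
  by (rule injI) (metis build_inv)

lemma avoid112_build: "is_setpart w \<Longrightarrow> \<not> has112 w \<Longrightarrow> \<exists>cs. w = build cs"
proof -
  assume "is_setpart w" "\<not> has112 w"
  then obtain k D where w: "w = [1..<Suc k] @ D" and so: "sorted_wrt (\<ge>) D"
    and sD: "set D \<subseteq> {1..k}" using avoid112_form by blast
  define cs where "cs = map (\<lambda>j. cnt D (Suc j)) [0..<k]"
  have "w = build cs" unfolding build_alt cs_def using w Dw_unique[OF so sD] by simp
  then show ?thesis by blast
qed



lemma emb_to_idx: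
  "list_emb P xs ys \<Longrightarrow>
   \<exists>f. strict_mono_on {..<length xs} f \<and> (\<forall>i<length xs. f i < length ys \<and> P (xs!i) (ys!f i))"
proof (induction rule: list_emb.induct)
  case (list_emb_Nil ys)
  then show ?case by (auto simp: strict_mono_on_def)
next
  case (list_emb_Cons xs ys y)
  then obtain f where f: "strict_mono_on {..<length xs} f" "\<forall>i<length xs. f i < length ys \<and> P (xs!i) (ys!f i)"
    by blast
  show ?case
    by (rule exI[of _ "Suc \<circ> f"]) (use f in \<open>auto simp: strict_mono_on_def\<close>)
next
  case (list_emb_Cons2 x y xs ys)
  then obtain f where f: "strict_mono_on {..<length xs} f" "\<forall>i<length xs. f i < length ys \<and> P (xs!i) (ys!f i)"
    by blast
  show ?case
  proof (rule exI[of _ "\<lambda>i. case i of 0 \<Rightarrow> 0 | Suc j \<Rightarrow> Suc (f j)"], intro conjI)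
    show "strict_mono_on {..<length (x # xs)} (\<lambda>i. case i of 0 \<Rightarrow> 0 | Suc j \<Rightarrow> Suc (f j))"
      unfolding strict_mono_on_def
    proof (intro allI impI)
      fix r s :: nat assume "r \<in> {..<length (x # xs)} \<and> s \<in> {..<length (x # xs)} \<and> r < s"
      then show "(case r of 0 \<Rightarrow> 0 | Suc j \<Rightarrow> Suc (f j)) < (case s of 0 \<Rightarrow> 0 | Suc j \<Rightarrow> Suc (f j))"
        using f(1) by (cases r; cases s) (auto simp: strict_mono_on_def)
    qed
  next
    show "\<forall>i<length (x # xs). (case i of 0 \<Rightarrow> 0 | Suc j \<Rightarrow> Suc (f j)) < length (y # ys) \<and>
          P ((x # xs) ! i) ((y # ys) ! (case i of 0 \<Rightarrow> 0 | Suc j \<Rightarrow> Suc (f j)))"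
    proof (intro allI impI)
      fix i assume "i < length (x # xs)"
      then show "(case i of 0 \<Rightarrow> 0 | Suc j \<Rightarrow> Suc (f j)) < length (y # ys) \<and>
          P ((x # xs) ! i) ((y # ys) ! (case i of 0 \<Rightarrow> 0 | Suc j \<Rightarrow> Suc (f j)))"
        using f(2) list_emb_Cons2.hyps(1) by (cases i) auto
    qed
  qed
qed

lemma idx_to_emb:
  "strict_mono_on {..<length xs} g \<Longrightarrow> (\<forall>i<length xs. g i < length ys \<and> P (xs!i) (ys!g i))
   \<Longrightarrow> list_emb P xs ys"
proof (induction ys arbitrary: xs g)
  case Nil
  then show ?case by (cases xs) auto
next
  case (Cons y ys)
  show ?case
  proof (cases xs)
    case Nil
    then show ?thesis by simp
  next
    case (Cons x xs')
    show ?thesis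
    proof (cases "g 0 = 0")
      case True
      have pos: "0 < g (Suc i)" if "i < length xs'" for i
      proof -
        have "g 0 < g (Suc i)" using Cons.prems(1) that unfolding strict_mono_on_def \<open>xs = x # xs'\<close>
          by simp
        then show ?thesis by simp
      qed
      have "list_emb P xs' ys"
      proof (rule Cons.IH[of xs' "\<lambda>i. g (Suc i) - 1"])
        show "strict_mono_on {..<length xs'} (\<lambda>i. g (Suc i) - 1)"
          unfolding strict_mono_on_def
        proof (intro allI impI)
          fix r s assume rs: "r \<in> {..<length xs'} \<and> s \<in> {..<length xs'} \<and> r < s"
          then have "g (Suc r) < g (Suc s)" using Cons.prems(1) unfolding strict_mono_on_def \<open>xs = x # xs'\<close>
            by auto
          then show "g (Suc r) - 1 < g (Suc s) - 1" using pos[of r] rs by auto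
        qed
        show "\<forall>i<length xs'. g (Suc i) - 1 < length ys \<and> P (xs' ! i) (ys ! (g (Suc i) - 1))"
        proof (intro allI impI)
          fix i assume i: "i < length xs'"
          then have "g (Suc i) < length (y # ys) \<and> P (xs ! Suc i) ((y#ys) ! g (Suc i))"
            using Cons.prems(2) \<open>xs = x # xs'\<close> by auto
          then show "g (Suc i) - 1 < length ys \<and> P (xs' ! i) (ys ! (g (Suc i) - 1))"
            using pos[OF i] \<open>xs = x # xs'\<close> by (cases "g (Suc i)") auto
        qed
      qed
      moreover have "P x y" using Cons.prems(2) True \<open>xs = x # xs'\<close> by fastforce
      ultimately show ?thesis using \<open>xs = x # xs'\<close> by auto
    next
      case False
      have pos: "0 < g i" if "i < length xs" for i
      proof (cases "i = 0")
        case True then show ?thesis using False by simp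
      next
        case False
        have "0 < length xs" using that by linarith
        then have "g 0 < g i" using Cons.prems(1) that False unfolding strict_mono_on_def
          by blast
        then show ?thesis by simp
      qed
      have "list_emb P xs ys"
      proof (rule Cons.IH[of xs "\<lambda>i. g i - 1"])
        show "strict_mono_on {..<length xs} (\<lambda>i. g i - 1)"
          unfolding strict_mono_on_def
        proof (intro allI impI)
          fix r s assume rs: "r \<in> {..<length xs} \<and> s \<in> {..<length xs} \<and> r < s"
          then have "g r < g s" using Cons.prems(1) unfolding strict_mono_on_def by auto
          then show "g r - 1 < g s - 1" using pos[of r] rs by auto
        qed
        show "\<forall>i<length xs. g i - 1 < length ys \<and> P (xs ! i) (ys ! (g i - 1))"
        proof (intro allI impI)
          fix i assume i: "i < length xs"
          then have "g i < length (y # ys) \<and> P (xs ! i) ((y#ys) ! g i)"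
            using Cons.prems(2) by auto
          then show "g i - 1 < length ys \<and> P (xs ! i) (ys ! (g i - 1))"
            using pos[OF i] by (cases "g i") auto
        qed
      qed
      then show ?thesis by auto
    qed
  qed
qed

lemma list_emb_map_Suc: "list_emb (=) xs ys \<Longrightarrow> list_emb (=) (map Suc xs) (map Suc ys)"
  by (induction rule: list_emb.induct) auto

lemma build_Nil: "build [] = []"
  by (simp add: build_def)

lemma emb_build: "list_emb (\<le>) bs cs \<Longrightarrow> \<exists>h. strict_mono h \<and> list_emb (=) (map h (build bs)) (build cs)"
proof (induction rule: list_emb.induct)
  case (list_emb_Nil ys)
  show ?case by (rule exI[of _ id]) (simp add: build_Nil strict_mono_def)
next
  case (list_emb_Cons xs ys y)
  then obtain h where h: "strict_mono h" "list_emb (=) (map h (build xs)) (build ys)" by blast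
  have "strict_mono (Suc \<circ> h)" using h(1) by (simp add: strict_mono_def)
  moreover have "list_emb (=) (map (Suc \<circ> h) (build xs)) (build (y # ys))"
  proof -
    have e: "list_emb (=) (map Suc (map h (build xs))) (map Suc (build ys))"
      by (rule list_emb_map_Suc[OF h(2)])
    have "list_emb (=) (map Suc (map h (build xs))) (1 # map Suc (build ys) @ replicate y 1)"
      by (rule list_emb.intros(2)[OF list_emb_prefix[OF e]])
    then show ?thesis by (simp add: build_Cons)
  qed
  ultimately show ?case by blast
next
  case (list_emb_Cons2 x y xs ys)
  then obtain h where h: "strict_mono h" "list_emb (=) (map h (build xs)) (build ys)" by blast
  define h' where "h' = (\<lambda>v. case v of 0 \<Rightarrow> 0 | Suc 0 \<Rightarrow> 1 | Suc (Suc u) \<Rightarrow> Suc (h (Suc u)))"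
  have "strict_mono h'"
    unfolding strict_mono_Suc_iff
  proof
    fix n show "h' n < h' (Suc n)"
    proof (cases n)
      case 0 then show ?thesis by (simp add: h'_def)
    next
      case (Suc m)
      then show ?thesis
      proof (cases m)
        case 0
        have "h 0 < h (Suc 0)" using h(1) by (simp add: strict_mono_less)
        then show ?thesis using \<open>n = Suc m\<close> \<open>m = 0\<close> by (simp add: h'_def)
      next
        case (Suc u)
        then show ?thesis using \<open>n = Suc m\<close> h(1) by (simp add: h'_def strict_mono_less)
      qed
    qed
  qed
  moreover have "list_emb (=) (map h' (build (x # xs))) (build (y # ys))"
  proof -
    have pos: "\<forall>v\<in>set (build xs). 1 \<le> v" by (simp add: set_build)
    have "map h' (map Suc (build xs)) = map Suc (map h (build xs))"
      using pos by (auto simp: h'_def split: nat.splits)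
    then have m: "map h' (build (x # xs)) = 1 # map Suc (map h (build xs)) @ replicate x 1"
      by (simp add: build_Cons h'_def)
    have r: "list_emb (=) (replicate x (1::nat)) (replicate y 1)"
    proof -
      have "replicate y (1::nat) = replicate (y - x) 1 @ replicate x 1"
        using list_emb_Cons2.hyps(1) by (simp add: replicate_add[symmetric])
      moreover have "list_emb (=) (replicate x (1::nat)) (replicate x 1)" by (rule list_emb_refl) simp
      ultimately show ?thesis by (simp add: list_emb_append2)
    qed
    have "list_emb (=) (1 # map Suc (map h (build xs)) @ replicate x 1) (1 # map Suc (build ys) @ replicate y 1)"
      by (intro list_emb.intros(3) list_emb_append_mono list_emb_map_Suc h(2) r) simp
    then show ?thesis unfolding m by (simp add: build_Cons)
  qed
  ultimately show ?case by blast
qed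

lemma contains_of_emb:
  assumes "strict_mono h" "list_emb (=) (map h t) w"
  shows "contains w t"
proof -
  obtain f where f: "strict_mono_on {..<length t} f"
    "\<forall>i<length t. f i < length w \<and> map h t ! i = w ! f i"
    using emb_to_idx[OF assms(2)] by auto
  have m: "map (\<lambda>i. w ! f i) [0..<length t] = map h t"
    using f(2) by (intro nth_equalityI) auto
  have "order_iso (map h t) t"
    unfolding order_iso_def using assms(1) by (simp add: strict_mono_less)
  then show ?thesis unfolding contains_def using f m by auto
qed

lemma contains_build: "contains (build cs) (build bs) \<Longrightarrow> list_emb (\<le>) bs cs"
proof -
  let ?w = "build cs" and ?t = "build bs"
  assume "contains ?w ?t"
  then obtain f where sm: "strict_mono_on {..<length ?t} f" and lt: "\<forall>i<length ?t. f i < length ?w"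
    and iso: "order_iso (map (\<lambda>i. ?w ! f i) [0..<length ?t]) ?t"
    unfolding contains_def by blast
  have iso': "(?w ! f p < ?w ! f q \<longleftrightarrow> ?t ! p < ?t ! q) \<and> (?w ! f p > ?w ! f q \<longleftrightarrow> ?t ! p > ?t ! q)"
    if "p < length ?t" "q < length ?t" for p q
    using iso that unfolding order_iso_def by auto
  have eqI: "?w ! f p = ?w ! f q" if "p < length ?t" "q < length ?t" "?t ! p = ?t ! q" for p q
    using iso'[OF that(1,2)] that(3) by auto
  have lessI: "?w ! f p < ?w ! f q" if "p < length ?t" "q < length ?t" "?t ! p < ?t ! q" for p q
    using iso'[OF that(1,2)] that(3) by auto
  have lb: "length bs \<le> length ?t" by (simp add: length_build)
  define g where "g i = ?w ! f i - 1" for i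
  have cnt_ge: "Suc (bs ! i) \<le> cnt ?w (?w ! f i)" if i: "i < length bs" for i
  proof -
    have it: "i < length ?t" using i lb by simp
    have "cnt ?t (Suc i) = Suc (bs ! i)" using i by (simp add: cnt_build)
    moreover have "cnt ?t (Suc i) = card {p. p < length ?t \<and> ?t ! p = Suc i}"
      by (simp add: cnt_def length_filter_conv_card eq_commute)
    moreover have "card {p. p < length ?t \<and> ?t ! p = Suc i} \<le> card {q. q < length ?w \<and> ?w ! q = ?w ! f i}"
    proof (rule card_inj_on_le[of f])
      show "inj_on f {p. p < length ?t \<and> ?t ! p = Suc i}"
        using strict_mono_on_imp_inj_on[OF sm] by (rule inj_on_subset) auto
      show "f ` {p. p < length ?t \<and> ?t ! p = Suc i} \<subseteq> {q. q < length ?w \<and> ?w ! q = ?w ! f i}"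
      proof
        fix q assume "q \<in> f ` {p. p < length ?t \<and> ?t ! p = Suc i}"
        then obtain p where p: "p < length ?t" "?t ! p = Suc i" "q = f p" by blast
        have "?t ! i = Suc i" using i by (simp add: build_nth)
        then have "?w ! f p = ?w ! f i" using eqI[OF p(1) it] p(2) by simp
        then show "q \<in> {q. q < length ?w \<and> ?w ! q = ?w ! f i}" using p lt by auto
      qed
      show "finite {q. q < length ?w \<and> ?w ! q = ?w ! f i}" by simp
    qed
    moreover have "cnt ?w (?w ! f i) = card {q. q < length ?w \<and> ?w ! q = ?w ! f i}"
      by (simp add: cnt_def length_filter_conv_card)
    ultimately show ?thesis by simp
  qed
  have gprop: "g i < length cs \<and> bs ! i \<le> cs ! g i \<and> 1 \<le> ?w ! f i" if i: "i < length bs" for i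
  proof -
    have c: "Suc (bs ! i) \<le> cnt ?w (?w ! f i)" by (rule cnt_ge[OF i])
    then have r: "1 \<le> ?w ! f i \<and> ?w ! f i \<le> length cs"
      by (simp add: cnt_build split: if_splits)
    then show ?thesis using c by (auto simp: cnt_build g_def)
  qed
  have "strict_mono_on {..<length bs} g"
    unfolding strict_mono_on_def
  proof (intro allI impI)
    fix r s assume rs: "r \<in> {..<length bs} \<and> s \<in> {..<length bs} \<and> r < s"
    then have "?t ! r < ?t ! s" by (simp add: build_nth)
    then have "?w ! f r < ?w ! f s" using lessI rs lb by auto
    moreover have "1 \<le> ?w ! f r" using gprop[of r] rs by blast
    ultimately show "g r < g s" unfolding g_def by linarith
  qed
  then show ?thesis
    by (rule idx_to_emb) (use gprop in blast)
qed

lemma contains_build_iff: "contains (build cs) (build bs) \<longleftrightarrow> list_emb (\<le>) bs cs"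
  using contains_build emb_build contains_of_emb by blast




definition Nset :: "nat list \<Rightarrow> nat \<Rightarrow> nat \<Rightarrow> nat list set" where
  "Nset bs n k = {cs. length cs = k \<and> k + sum_list cs = n \<and> \<not> list_emb (\<le>) bs cs}"

lemma pnk_eq: "pnk n k {[1,1,2], tau112 a} = card (Nset (map (\<lambda>x. x - 1) a) n k)"
proof -
  let ?bs = "map (\<lambda>x. x - 1) a"
  have "{w. is_setpart w \<and> length w = n \<and> nblocks w = k \<and> (\<forall>t\<in>{[1,1,2], tau112 a}. \<not> contains w t)}
        = build ` Nset ?bs n k"
  proof
    show "{w. is_setpart w \<and> length w = n \<and> nblocks w = k \<and> (\<forall>t\<in>{[1,1,2], tau112 a}. \<not> contains w t)}
        \<subseteq> build ` Nset ?bs n k"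
    proof
      fix w assume "w \<in> {w. is_setpart w \<and> length w = n \<and> nblocks w = k \<and> (\<forall>t\<in>{[1,1,2], tau112 a}. \<not> contains w t)}"
      then have h: "is_setpart w" "length w = n" "nblocks w = k" "\<not> contains w [1,1,2]"
        "\<not> contains w (tau112 a)" by auto
      then obtain cs where w: "w = build cs" using avoid112_build contains112 by blast
      have "cs \<in> Nset ?bs n k" using h unfolding w Nset_def
        by (simp add: nblocks_build length_build tau112_build contains_build_iff)
      then show "w \<in> build ` Nset ?bs n k" using w by blast
    qed
  next
    show "build ` Nset ?bs n k \<subseteq>
      {w. is_setpart w \<and> length w = n \<and> nblocks w = k \<and> (\<forall>t\<in>{[1,1,2], tau112 a}. \<not> contains w t)}"
      using no112_build unfolding Nset_def
      by (auto simp: setpart_build nblocks_build length_build tau112_build contains_build_iff contains112[simplified])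
  qed
  then show ?thesis unfolding pnk_def
    using card_image[OF inj_on_subset[OF inj_build subset_UNIV]] by simp
qed

lemma Nset_finite: "finite (Nset bs n k)"
proof (rule finite_subset)
  show "Nset bs n k \<subseteq> {xs. set xs \<subseteq> {..n} \<and> length xs = k}"
    unfolding Nset_def using member_le_sum_list by fastforce
  show "finite {xs. set xs \<subseteq> {..n} \<and> length xs = k}" by (rule finite_lists_length_eq) simp
qed

lemma Nset_Nil: "Nset [] n k = {}"
  by (simp add: Nset_def)

lemma Nset_big: "n < k \<Longrightarrow> Nset bs n k = {}"
  by (auto simp: Nset_def)

lemma Nset_0: "Nset (b#bs) n 0 = (if n = 0 then {[]} else {})"
  by (auto simp: Nset_def)

lemma Nset_Suc: "Nset (b#bs) (Suc m) (Suc k) =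
   (\<Union>c\<in>{..m}. (\<lambda>cs. c # cs) ` (if b \<le> c then Nset bs (m - c) k else Nset (b#bs) (m - c) k))"
proof
  show "Nset (b#bs) (Suc m) (Suc k) \<subseteq> (\<Union>c\<in>{..m}. (\<lambda>cs. c # cs) ` (if b \<le> c then Nset bs (m - c) k else Nset (b#bs) (m - c) k))"
  proof
    fix xs assume "xs \<in> Nset (b#bs) (Suc m) (Suc k)"
    then obtain c cs where xs: "xs = c # cs" and h: "length cs = k" "Suc k + (c + sum_list cs) = Suc m"
      "\<not> list_emb (\<le>) (b#bs) (c#cs)"
      unfolding Nset_def by (cases xs) auto
    have "c \<le> m" using h by simp
    moreover have "cs \<in> (if b \<le> c then Nset bs (m - c) k else Nset (b#bs) (m - c) k)"
      using h by (auto simp: Nset_def)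
    ultimately show "xs \<in> (\<Union>c\<in>{..m}. (\<lambda>cs. c # cs) ` (if b \<le> c then Nset bs (m - c) k else Nset (b#bs) (m - c) k))"
      using xs by blast
  qed
next
  show "(\<Union>c\<in>{..m}. (\<lambda>cs. c # cs) ` (if b \<le> c then Nset bs (m - c) k else Nset (b#bs) (m - c) k)) \<subseteq> Nset (b#bs) (Suc m) (Suc k)"
    by (auto simp: Nset_def split: if_splits)
qed

definition Nc :: "nat list \<Rightarrow> nat \<Rightarrow> nat \<Rightarrow> nat" where
  "Nc bs n k = card (Nset bs n k)"

lemma Nc_Suc: "Nc (b#bs) (Suc m) (Suc k) =
   (\<Sum>c\<le>m. if b \<le> c then Nc bs (m - c) k else Nc (b#bs) (m - c) k)"
proof -
  have "Nc (b#bs) (Suc m) (Suc k) = (\<Sum>c\<le>m. card ((\<lambda>cs. c # cs) ` (if b \<le> c then Nset bs (m - c) k else Nset (b#bs) (m - c) k)))"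
    unfolding Nc_def Nset_Suc
    by (rule card_UN_disjoint) (auto simp: Nset_finite)
  also have "\<dots> = (\<Sum>c\<le>m. card (if b \<le> c then Nset bs (m - c) k else Nset (b#bs) (m - c) k))"
    by (intro sum.cong refl card_image) (simp add: inj_on_def)
  finally show ?thesis unfolding Nc_def by (simp add: if_distrib)
qed

lemma Nc_Nil: "Nc [] n k = 0"
  by (simp add: Nc_def Nset_Nil)

lemma Nc_big: "n < k \<Longrightarrow> Nc bs n k = 0"
  by (simp add: Nc_def Nset_big)

lemma Nc_0: "Nc (b#bs) n 0 = (if n = 0 then 1 else 0)"
  by (simp add: Nc_def Nset_0)

definition Yv :: "int poly fract" where "Yv = Fract [:0, 1:] 1"

lemma Fract_add1: "Fract (a + b) 1 = Fract a 1 + Fract (b::'a::idom) 1"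
  by simp

lemma Fract_mult1: "Fract (a * b) 1 = Fract a 1 * Fract (b::'a::idom) 1"
  by simp

lemma Fract_sum: "finite A \<Longrightarrow> Fract (\<Sum>k\<in>A. f k) 1 = (\<Sum>k\<in>A. Fract (f k) 1)"
  by (induction A rule: finite_induct) (simp_all add: Zero_fract_def Fract_add1 del: add_fract)

lemma Fract_pow: "Fract (p ^ k) 1 = (Fract p 1) ^ k"
  by (induction k) (simp_all add: One_fract_def Fract_mult1 del: mult_fract)

lemma Fract_monom: "Fract (monom (int m) k) 1 = of_nat m * Yv ^ k"
proof -
  have "monom (int m) k = [:int m:] * [:0, 1:] ^ k" by (simp add: monom_altdef)
  then have "Fract (monom (int m) k) 1 = Fract [:int m:] 1 * Fract ([:0, 1:] ^ k) 1" by simp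
  also have "Fract [:int m:] 1 = of_nat m"
    by (metis Fract_of_nat_eq of_nat_poly of_int_of_nat_eq)
  finally show ?thesis by (simp add: Fract_pow Yv_def)
qed

definition Gs :: "nat list \<Rightarrow> int poly fract fps" where
  "Gs bs = Abs_fps (\<lambda>n. \<Sum>k\<le>n. of_nat (Nc bs n k) * Yv ^ k)"

lemma Fgf_Gs: "Fgf a = Gs (map (\<lambda>x. x - 1) a)"
  unfolding Fgf_def Gs_def pnk_eq Nc_def
  by (simp add: Fract_sum Fract_monom)

lemma Gs_nth_ext: "n \<le> M \<Longrightarrow> Gs bs $ n = (\<Sum>k\<le>M. of_nat (Nc bs n k) * Yv ^ k)"
proof -
  assume "n \<le> M"
  then have "(\<Sum>k\<le>n. of_nat (Nc bs n k) * Yv ^ k) = (\<Sum>k\<le>M. of_nat (Nc bs n k) * Yv ^ k)"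
    by (intro sum.mono_neutral_left) (auto simp: Nc_big not_le)
  then show ?thesis by (simp add: Gs_def)
qed

lemma Gs_Nil: "Gs [] = 0"
  by (simp add: Gs_def Nc_Nil fps_eq_iff)




definition Pf :: "nat \<Rightarrow> int poly fract fps" where
  "Pf b = Abs_fps (\<lambda>j. if j < b then 1 else 0)"
definition Qf :: "nat \<Rightarrow> int poly fract fps" where
  "Qf b = Abs_fps (\<lambda>j. if b \<le> j then 1 else 0)"

lemma yvar_Yv: "yvar = fps_const Yv"
  by (simp add: yvar_def Yv_def)

lemma Gs_rec: "Gs (b#bs) = 1 + fps_X * (yvar * (Qf b * Gs bs + Pf b * Gs (b#bs)))"
proof (rule fps_ext)
  fix n
  show "Gs (b#bs) $ n = (1 + fps_X * (yvar * (Qf b * Gs bs + Pf b * Gs (b#bs)))) $ n"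
  proof (cases n)
    case 0
    then show ?thesis by (simp add: Gs_def Nc_0)
  next
    case (Suc m)
    define T where "T c k = (if b \<le> c then Nc bs (m - c) k else Nc (b#bs) (m - c) k)" for c k
    have H: "(Qf b * Gs bs + Pf b * Gs (b#bs)) $ m = (\<Sum>c\<le>m. \<Sum>k\<le>m. of_nat (T c k) * Yv ^ k)"
    proof -
      have "(Qf b * Gs bs + Pf b * Gs (b#bs)) $ m =
            (\<Sum>c=0..m. Qf b $ c * Gs bs $ (m - c) + Pf b $ c * Gs (b#bs) $ (m - c))"
        by (simp add: fps_mult_nth sum.distrib)
      also have "\<dots> = (\<Sum>c\<le>m. (\<Sum>k\<le>m. of_nat (T c k) * Yv ^ k))"
        unfolding atLeast0AtMost
      proof (rule sum.cong[OF refl])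
        fix c assume "c \<in> {..m}"
        then have cm: "m - c \<le> m" by simp
        show "Qf b $ c * Gs bs $ (m - c) + Pf b $ c * Gs (b#bs) $ (m - c) = (\<Sum>k\<le>m. of_nat (T c k) * Yv ^ k)"
          using Gs_nth_ext[OF cm, of bs] Gs_nth_ext[OF cm, of "b#bs"]
          by (simp add: Qf_def Pf_def T_def)
      qed
      finally show ?thesis .
    qed
    have "Gs (b#bs) $ Suc m = (\<Sum>k\<le>Suc m. of_nat (Nc (b#bs) (Suc m) k) * Yv ^ k)"
      by (simp add: Gs_def)
    also have "\<dots> = (\<Sum>k\<le>m. of_nat (Nc (b#bs) (Suc m) (Suc k)) * Yv ^ Suc k)"
      by (subst sum.atMost_Suc_shift) (simp add: Nc_0)
    also have "\<dots> = (\<Sum>k\<le>m. \<Sum>c\<le>m. Yv * (of_nat (T c k) * Yv ^ k))"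
      by (simp add: Nc_Suc T_def sum_distrib_left sum_distrib_right mult_ac)
    also have "\<dots> = Yv * (\<Sum>c\<le>m. \<Sum>k\<le>m. of_nat (T c k) * Yv ^ k)"
      by (subst sum.swap) (simp add: sum_distrib_left)
    also have "\<dots> = (1 + fps_X * (yvar * (Qf b * Gs bs + Pf b * Gs (b#bs)))) $ Suc m"
    proof -
      have "(1 + fps_X * (yvar * F)) $ Suc m = Yv * F $ m" for F :: "int poly fract fps"
        by (simp add: yvar_Yv)
      then show ?thesis unfolding H[symmetric] by simp
    qed
    finally show ?thesis using Suc by simp
  qed
qed

lemma Qf_eq: "(1 - fps_X) * Qf b = fps_X ^ b"
proof (rule fps_ext)
  fix n
  have "((1 - fps_X) * Qf b) $ n = Qf b $ n - (fps_X * Qf b) $ n" by (simp add: algebra_simps)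
  then show "((1 - fps_X) * Qf b) $ n = (fps_X ^ b :: int poly fract fps) $ n"
    by (cases n) (auto simp: Qf_def)
qed

lemma Pf_eq: "(1 - fps_X) * Pf b = 1 - fps_X ^ b"
proof (rule fps_ext)
  fix n
  have "((1 - fps_X) * Pf b) $ n = Pf b $ n - (fps_X * Pf b) $ n" by (simp add: algebra_simps)
  then show "((1 - fps_X) * Pf b) $ n = (1 - fps_X ^ b :: int poly fract fps) $ n"
    by (cases n) (auto simp: Pf_def)
qed

lemma Gs_D: "Gs (b#bs) * (1 - fps_X * (1 + yvar) + fps_X ^ (Suc b) * yvar) =
   (1 - fps_X) + fps_X ^ Suc b * yvar * Gs bs"
proof -
  let ?G = "Gs (b#bs)" and ?G' = "Gs bs" and ?X = "fps_X :: int poly fract fps" and ?Y = yvar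
  have r: "?G = 1 + ?X * (?Y * (Qf b * ?G' + Pf b * ?G))" by (rule Gs_rec)
  have "(1 - ?X) * ?G = (1 - ?X) * (1 + ?X * (?Y * (Qf b * ?G' + Pf b * ?G)))"
    by (rule arg_cong[where f="\<lambda>z. (1 - fps_X) * z", OF r])
  also have "\<dots> = (1 - ?X) + ?X * ?Y * (((1 - ?X) * Qf b) * ?G' + ((1 - ?X) * Pf b) * ?G)"
    by (simp add: algebra_simps)
  also have "\<dots> = (1 - ?X) + ?X * ?Y * (?X ^ b * ?G' + (1 - ?X ^ b) * ?G)"
    by (simp only: Qf_eq Pf_eq)
  finally have e: "(1 - ?X) * ?G = (1 - ?X) + ?X * ?Y * (?X ^ b * ?G' + (1 - ?X ^ b) * ?G)" .
  have "?G * (1 - ?X * (1 + ?Y) + ?X ^ (Suc b) * ?Y) = (1 - ?X) * ?G - ?X * ?Y * ?G + ?X * ?X ^ b * ?Y * ?G"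
    by (simp add: algebra_simps)
  also have "\<dots> = (1 - ?X) + ?X * ?Y * (?X ^ b * ?G' + (1 - ?X ^ b) * ?G) - ?X * ?Y * ?G + ?X * ?X ^ b * ?Y * ?G"
    by (simp only: e)
  also have "\<dots> = (1 - ?X) + ?X ^ Suc b * ?Y * ?G'"
    by (simp add: algebra_simps)
  finally show ?thesis .
qed

definition Dn :: "nat \<Rightarrow> int poly fract fps" where
  "Dn a = 1 - fps_X * (1 + yvar) + fps_X ^ a * yvar"

definition Rm :: "nat list \<Rightarrow> int poly fract fps" where
  "Rm as = (\<Sum>j<length as. fps_X ^ (\<Sum>i<j. as ! i) * yvar ^ j * (1 - fps_X) *
      inverse (\<Prod>i<Suc j. Dn (as ! i)))"

lemma Dn_0: "0 < a \<Longrightarrow> Dn a $ 0 = 1"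
  by (simp add: Dn_def yvar_def)

lemma prod_nth0: "finite A \<Longrightarrow> (\<Prod>i\<in>A. F i) $ 0 = (\<Prod>i\<in>A. (F i :: int poly fract fps) $ 0)"
  by (induction A rule: finite_induct) simp_all

lemma Rm_Cons: "Rm (a#as) = inverse (Dn a) * ((1 - fps_X) + fps_X ^ a * yvar * Rm as)"
proof -
  have "Rm (a#as) = (1 - fps_X) * inverse (Dn a) +
     (\<Sum>j<length as. fps_X ^ (\<Sum>i<Suc j. (a#as) ! i) * yvar ^ Suc j * (1 - fps_X) *
      inverse (\<Prod>i<Suc (Suc j). Dn ((a#as) ! i)))"
    unfolding Rm_def by (simp add: sum.lessThan_Suc_shift del: sum.lessThan_Suc)
  also have "(\<Sum>j<length as. fps_X ^ (\<Sum>i<Suc j. (a#as) ! i) * yvar ^ Suc j * (1 - fps_X) *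
      inverse (\<Prod>i<Suc (Suc j). Dn ((a#as) ! i))) =
     (\<Sum>j<length as. inverse (Dn a) * (fps_X ^ a * yvar * (fps_X ^ (\<Sum>i<j. as ! i) * yvar ^ j * (1 - fps_X) *
      inverse (\<Prod>i<Suc j. Dn (as ! i)))))"
  proof (rule sum.cong[OF refl])
    fix j
    have s: "(\<Sum>i<Suc j. (a#as) ! i) = a + (\<Sum>i<j. as ! i)"
      by (simp add: sum.lessThan_Suc_shift del: sum.lessThan_Suc)
    have p: "(\<Prod>i<Suc (Suc j). Dn ((a#as) ! i)) = Dn a * (\<Prod>i<Suc j. Dn (as ! i))"
      by (subst prod.lessThan_Suc_shift) simp
    show "fps_X ^ (\<Sum>i<Suc j. (a#as) ! i) * yvar ^ Suc j * (1 - fps_X) *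
      inverse (\<Prod>i<Suc (Suc j). Dn ((a#as) ! i)) =
      inverse (Dn a) * (fps_X ^ a * yvar * (fps_X ^ (\<Sum>i<j. as ! i) * yvar ^ j * (1 - fps_X) *
      inverse (\<Prod>i<Suc j. Dn (as ! i))))"
      unfolding s p fps_inverse_mult by (simp add: power_add mult_ac)
  qed
  finally show ?thesis unfolding Rm_def by (simp add: sum_distrib_left algebra_simps)
qed

lemma Rm_Nil: "Rm [] = 0"
  by (simp add: Rm_def)

lemma Gs_Rm: "\<forall>x\<in>set a. 0 < x \<Longrightarrow> Gs (map (\<lambda>x. x - 1) a) = Rm a"
proof (induction a)
  case Nil
  then show ?case by (simp add: Gs_Nil Rm_Nil)
next
  case (Cons a as)
  then have a0: "0 < a" and IH: "Gs (map (\<lambda>x. x - 1) as) = Rm as" by auto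
  have D0: "Dn a $ 0 \<noteq> 0" using Dn_0[OF a0] by simp
  then have Dnz: "Dn a \<noteq> 0" by auto
  have sa: "Suc (a - 1) = a" using a0 by simp
  have "Gs (map (\<lambda>x. x - 1) (a # as)) * Dn a = (1 - fps_X) + fps_X ^ a * yvar * Rm as"
    using Gs_D[of "a - 1" "map (\<lambda>x. x - 1) as"] unfolding sa IH Dn_def by simp
  also have "\<dots> = Rm (a # as) * Dn a"
    unfolding Rm_Cons using inverse_mult_eq_1[OF D0] by (simp add: mult_ac)
  finally show ?case using Dnz by simp
qed

lemma R_eq:
  assumes "\<forall>x\<in>set as. 0 < x"
  shows "(\<Sum>j<length as.
        fps_X ^ (\<Sum>i<j. as ! i) * yvar ^ j * (1 - fps_X) /
        (\<Prod>i<Suc j. 1 - fps_X * (1 + yvar) + fps_X ^ (as ! i) * yvar)) = Rm as"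
  unfolding Rm_def
proof (rule sum.cong[OF refl])
  fix j assume "j \<in> {..<length as}"
  then have "\<forall>i\<in>{..<Suc j}. 0 < as ! i" using assms by auto
  then have "(\<Prod>i<Suc j. Dn (as ! i)) $ 0 = 1"
    by (simp add: prod_nth0 Dn_0)
  then show "fps_X ^ (\<Sum>i<j. as ! i) * yvar ^ j * (1 - fps_X) /
        (\<Prod>i<Suc j. 1 - fps_X * (1 + yvar) + fps_X ^ (as ! i) * yvar) =
        fps_X ^ (\<Sum>i<j. as ! i) * yvar ^ j * (1 - fps_X) * inverse (\<Prod>i<Suc j. Dn (as ! i))"
    unfolding Dn_def by (simp add: fps_divide_unit)
qed

theorem theorem2p5:
  fixes a :: "nat list"
  assumes "a \<noteq> []" and "\<forall>x\<in>set a. 0 < x"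
  shows "Fgf a =
    (\<Sum>j<length a.
        fps_X ^ (\<Sum>i<j. a ! i) * yvar ^ j * (1 - fps_X) /
        (\<Prod>i<Suc j. 1 - fps_X * (1 + yvar) + fps_X ^ (a ! i) * yvar))"
  unfolding R_eq[OF assms(2)] Fgf_Gs Gs_Rm[OF assms(2)] ..


end
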